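(* Let $k$ be a positive integer and let $G$ be a DPG-$[k,2]$-colorable graph. Then: (1) $G$ is DP-$k$-colorable, and thus $k$-choosable. (2) $G$ is DP-vertex-$\lceil k/2\rceil$-arborable. (3) Let $d$ be an integer with $2d>k$ and $d\le k$. If $L$ is a $d$-assignment of $G$ (colors being positive integers, so that $1,2,\dots,2d-k$ are colors), then $G$ has an $L$-forested-coloring such that $C(i)$ is an independent set for each $i\in\{1,\dots,2d-k\}$.
   Context: All graphs are finite, simple, undirected. An assignment $L$ gives each vertex $v$ a set $L(v)$ of colors (positive integers); $k$-assignment means $|L(v)|=k$; $G$ is $k$-choosable if every $k$-assignment admits a proper coloring from the lists. A cover $H$ of $G$ w.r.t. $L$ has vertex set $\{(u,c):c\in L(u)\}$, each $\{u\}\times L(u)$ is a clique, for each edge $uv$ the edges between $\{u\}\times L(u)$ and $\{v\}\times L(v)$ form a matching, and there are no such edges for non-adjacent $u,v$. A representative set contains exactly one vertex of each $\{v\}\times L(v)$. DP-coloring: representative $R$ with $H[R]$ edgeless; DP-$k$-colorable: exists for every $k$-assignment and cover. DP-forested-coloring: representative $R$ with $H[R]$ a forest; DP-vertex-$k$-arborable: exists for every $k$-assignment and cover. $L$-forested-coloring: $c(v)\in L(v)$ with every color class inducing a forest; $C(i)$ is the set of vertices colored $i$. For $F=(f_1,\dots,f_s)$, $f_i:V(G)\to\mathbb{Z}_{\ge0}$, $|f(v)|=\sum_i f_i(v)$; a DP-$F$-coloring of $(G,H)$ is a representative set $R$ admitting an ordering in which each $(v,i)\in R$ has fewer than $f_i(v)$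 $H$-neighbors among earlier elements of $R$. $G$ is DPG-$[k,t]$-colorable if for every $s\ge1$, every cover $H$ w.r.t. $L(v)=\{1,\dots,s\}$ for all $v$, and every $F$ with $|f(v)|\ge k$ and $f_i(v)\le t$ for all $v,i$, $(G,H)$ has a DP-$F$-coloring. *)

theory Defs
  imports Complex_Main
begin

definition graph :: "'v set \<Rightarrow> ('v \<Rightarrow> 'v \<Rightarrow> bool) \<Rightarrow> bool" where
  "graph V E \<longleftrightarrow> finite V \<and> (\<forall>u v. E u v \<longrightarrow> u \<in> V \<and> v \<in> V \<and> u \<noteq> v \<and> E v u)"

definition has_cycle_in :: "('a \<Rightarrow> 'a \<Rightarrow> bool) \<Rightarrow> 'a set \<Rightarrow> bool" where
  "has_cycle_in A S \<longleftrightarrow> (\<exists>xs. length xs \<ge> 3 \<and> distinct xs \<and> set xs \<subseteq> S \<and>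
      (\<forall>i < length xs. A (xs ! i) (xs ! ((i + 1) mod length xs))))"

definition forest_on :: "('a \<Rightarrow> 'a \<Rightarrow> bool) \<Rightarrow> 'a set \<Rightarrow> bool" where
  "forest_on A S \<longleftrightarrow> \<not> has_cycle_in A S"

definition independent_on :: "('a \<Rightarrow> 'a \<Rightarrow> bool) \<Rightarrow> 'a set \<Rightarrow> bool" where
  "independent_on A S \<longleftrightarrow> (\<forall>x\<in>S. \<forall>y\<in>S. \<not> A x y)"

definition k_assignment :: "'v set \<Rightarrow> nat \<Rightarrow> ('v \<Rightarrow> nat set) \<Rightarrow> bool" where
  "k_assignment V k L \<longleftrightarrow> (\<forall>v\<in>V. finite (L v) \<and> card (L v) = k \<and> 0 \<notin> L v)"

definition cover_verts :: "'v set \<Rightarrow> ('v \<Rightarrow> nat set) \<Rightarrow> ('v \<times> nat) set" where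
  "cover_verts V L = {(u, c). u \<in> V \<and> c \<in> L u}"

definition is_cover :: "'v set \<Rightarrow> ('v \<Rightarrow> 'v \<Rightarrow> bool) \<Rightarrow> ('v \<Rightarrow> nat set)
    \<Rightarrow> ('v \<times> nat \<Rightarrow> 'v \<times> nat \<Rightarrow> bool) \<Rightarrow> bool" where
  "is_cover V E L H \<longleftrightarrow>
     (\<forall>x y. H x y \<longrightarrow> x \<in> cover_verts V L \<and> y \<in> cover_verts V L \<and> x \<noteq> y \<and> H y x) \<and>
     (\<forall>u\<in>V. \<forall>c\<in>L u. \<forall>c'\<in>L u. c \<noteq> c' \<longrightarrow> H (u, c) (u, c')) \<and>
     (\<forall>u v c c'. u \<noteq> v \<and> H (u, c) (v, c') \<longrightarrow> E u v) \<and>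
     (\<forall>u v c c1 c2. u \<noteq> v \<and> H (u, c) (v, c1) \<and> H (u, c) (v, c2) \<longrightarrow> c1 = c2)"

definition representative :: "'v set \<Rightarrow> ('v \<Rightarrow> nat set) \<Rightarrow> ('v \<times> nat) set \<Rightarrow> bool" where
  "representative V L R \<longleftrightarrow> R \<subseteq> cover_verts V L \<and> (\<forall>v\<in>V. \<exists>!c. (v, c) \<in> R)"

definition DP_colorable :: "'v set \<Rightarrow> ('v \<Rightarrow> 'v \<Rightarrow> bool) \<Rightarrow> nat \<Rightarrow> bool" where
  "DP_colorable V E k \<longleftrightarrow> (\<forall>L H. k_assignment V k L \<and> is_cover V E L H \<longrightarrow>
     (\<exists>R. representative V L R \<and> independent_on H R))"

definition DP_vertex_arborable :: "'v set \<Rightarrow> ('v \<Rightarrow> 'v \<Rightarrow> bool) \<Rightarrow> nat \<Rightarrow> bool" where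
  "DP_vertex_arborable V E k \<longleftrightarrow> (\<forall>L H. k_assignment V k L \<and> is_cover V E L H \<longrightarrow>
     (\<exists>R. representative V L R \<and> forest_on H R))"

definition choosable :: "'v set \<Rightarrow> ('v \<Rightarrow> 'v \<Rightarrow> bool) \<Rightarrow> nat \<Rightarrow> bool" where
  "choosable V E k \<longleftrightarrow> (\<forall>L. k_assignment V k L \<longrightarrow>
     (\<exists>c. (\<forall>v\<in>V. c v \<in> L v) \<and> (\<forall>u v. E u v \<longrightarrow> c u \<noteq> c v)))"

definition color_class :: "'v set \<Rightarrow> ('v \<Rightarrow> nat) \<Rightarrow> nat \<Rightarrow> 'v set" where
  "color_class V c i = {v \<in> V. c v = i}"

definition L_forested_coloring :: "'v set \<Rightarrow> ('v \<Rightarrow> 'v \<Rightarrow> bool) \<Rightarrow> ('v \<Rightarrow> nat set)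
    \<Rightarrow> ('v \<Rightarrow> nat) \<Rightarrow> bool" where
  "L_forested_coloring V E L c \<longleftrightarrow> (\<forall>v\<in>V. c v \<in> L v) \<and>
     (\<forall>i. forest_on E (color_class V c i))"

text \<open>F = (f_1,...,f_s) is represented by f :: nat => 'v => nat, f i = f_i for 1 <= i <= s.\<close>
definition DP_F_coloring :: "'v set \<Rightarrow> ('v \<Rightarrow> nat set) \<Rightarrow> ('v \<times> nat \<Rightarrow> 'v \<times> nat \<Rightarrow> bool)
    \<Rightarrow> (nat \<Rightarrow> 'v \<Rightarrow> nat) \<Rightarrow> ('v \<times> nat) set \<Rightarrow> bool" where
  "DP_F_coloring V L H f R \<longleftrightarrow> representative V L R \<and>
     (\<exists>xs. distinct xs \<and> set xs = R \<and>
        (\<forall>j < length xs. card {l. l < j \<and> H (xs ! l) (xs ! j)} < f (snd (xs ! j)) (fst (xs ! j))))"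

definition DPG_colorable :: "'v set \<Rightarrow> ('v \<Rightarrow> 'v \<Rightarrow> bool) \<Rightarrow> nat \<Rightarrow> nat \<Rightarrow> bool" where
  "DPG_colorable V E k t \<longleftrightarrow>
     (\<forall>s::nat. \<forall>H f. s \<ge> 1 \<and> is_cover V E (\<lambda>_. {1..s}) H \<and>
        (\<forall>v\<in>V. (\<Sum>i=1..s. f i v) \<ge> k) \<and> (\<forall>v\<in>V. \<forall>i\<in>{1..s}. f i v \<le> t) \<longrightarrow>
        (\<exists>R. DP_F_coloring V (\<lambda>_. {1..s}) H f R))"

end

theory Submission
  imports Defs
begin

lemma indep_core:
  assumes sym: "\<forall>x y. H x y \<longrightarrow> H y x" and d: "distinct xs"
    and x: "x \<in> set xs" and y: "y \<in> set xs" and h: "H x y" and ne: "x \<noteq> y"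
  shows "\<exists>j<length xs. xs!j \<in> {x,y} \<and> card {l. l<j \<and> H (xs!l) (xs!j)} \<ge> 1"
proof -
  obtain a where a: "a < length xs" "xs!a = x" using x by (metis in_set_conv_nth)
  obtain b where b: "b < length xs" "xs!b = y" using y by (metis in_set_conv_nth)
  have "a \<noteq> b" using a b ne by auto
  show ?thesis
  proof (cases "a < b")
    case True
    have fin: "finite {l. l<b \<and> H (xs!l) (xs!b)}" by auto
    have "a \<in> {l. l<b \<and> H (xs!l) (xs!b)}" using True a b h by auto
    then have "card {l. l<b \<and> H (xs!l) (xs!b)} \<ge> 1"
      using fin by (metis One_nat_def Suc_leI card_gt_0_iff empty_iff)
    then show ?thesis using b by auto
  next
    case False
    then have ba: "b < a" using \<open>a \<noteq> b\<close> by auto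
    have fin: "finite {l. l<a \<and> H (xs!l) (xs!a)}" by auto
    have "b \<in> {l. l<a \<and> H (xs!l) (xs!a)}" using ba a b h sym by auto
    then have "card {l. l<a \<and> H (xs!l) (xs!a)} \<ge> 1"
      using fin by (metis One_nat_def Suc_leI card_gt_0_iff empty_iff)
    then show ?thesis using a by auto
  qed
qed

lemma mod_facts0:
  fixes p n :: nat assumes "p < n" "n \<ge> 3"
  shows "(p+1) mod n \<noteq> p \<and> (p+n-1) mod n \<noteq> p \<and> (p+1) mod n \<noteq> (p+n-1) mod n \<and>
    ((p+n-1) + 1) mod n = p"
proof -
  consider "p = 0" | "p = n - 1" | "0 < p \<and> p < n - 1" using assms by linarith
  then show ?thesis
  proof cases
    case 1 then show ?thesis using assms by auto
  next
    case 2
    then have e1: "p + 1 = n" and e2: "p+n-1 = n + (n - 2)" using assms by auto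
    have f1: "(p+1) mod n = 0" using e1 by simp
    have f2: "(p+n-1) mod n = n - 2" using assms by (simp only: e2 mod_add_self1, simp)
    have e3: "p+n-1+1 = n + p" using assms by simp
    have f3: "(p+n-1+1) mod n = p" using assms by (simp only: e3 mod_add_self1, simp)
    show ?thesis using f1 f2 f3 assms 2 by auto
  next
    case 3
    then have e1: "p + 1 < n" and e2: "p+n-1 = n + (p - 1)" and e3: "p+n-1+1 = n + p" using assms by auto
    have f1: "(p+1) mod n = p + 1" using e1 by simp
    have f2: "(p+n-1) mod n = p - 1" using assms 3 by (simp only: e2 mod_add_self1, simp)
    have f3: "(p+n-1+1) mod n = p" using e3 assms 3 by simp
    show ?thesis using f1 f2 f3 assms 3 by auto
  qed
qed

lemmas mod_facts = mod_facts0[THEN conjunct1] mod_facts0[THEN conjunct2, THEN conjunct1]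
  mod_facts0[THEN conjunct2, THEN conjunct2, THEN conjunct1]
  mod_facts0[THEN conjunct2, THEN conjunct2, THEN conjunct2]

definition idx :: "'a list \<Rightarrow> 'a \<Rightarrow> nat" where
  "idx xs x = (THE i. i < length xs \<and> xs!i = x)"

lemma idx_props:
  assumes "distinct xs" "x \<in> set xs"
  shows "idx xs x < length xs" "xs ! idx xs x = x"
proof -
  have "\<exists>!i. i < length xs \<and> xs!i = x" using distinct_Ex1 assms by metis
  then have "idx xs x < length xs \<and> xs ! idx xs x = x" unfolding idx_def by (rule theI')
  then show "idx xs x < length xs" "xs ! idx xs x = x" by auto
qed

lemma cycle_core:
  assumes sym: "\<forall>x y. H x y \<longrightarrow> H y x" and d: "distinct xs"
    and cyc: "has_cycle_in H S" and sub: "S \<subseteq> set xs"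
  shows "\<exists>j<length xs. xs!j \<in> S \<and> card {l. l<j \<and> H (xs!l) (xs!j)} \<ge> 2"
proof -
  obtain cs where cs: "length cs \<ge> 3" "distinct cs" "set cs \<subseteq> S"
    "\<forall>i < length cs. H (cs ! i) (cs ! ((i + 1) mod length cs))"
    using cyc unfolding has_cycle_in_def by blast
  define n where "n = length cs"
  have n3: "n \<ge> 3" using cs n_def by auto
  define m where "m = Max (idx xs ` set cs)"
  have csne: "set cs \<noteq> {}" using cs(1) by auto
  have m: "m \<in> idx xs ` set cs" "\<forall>z \<in> idx xs ` set cs. z \<le> m"
    unfolding m_def using csne by (auto intro: Max_in Max_ge)
  then obtain p where p: "p < n" "idx xs (cs!p) = m" unfolding n_def
    by (metis image_iff in_set_conv_nth)
  have pmax: "\<And>q. q < n \<Longrightarrow> idx xs (cs!q) \<le> idx xs (cs!p)"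
    using m p unfolding n_def by auto
  define a where "a = (p+1) mod n"
  define b where "b = (p+n-1) mod n"
  have an: "a < n" "b < n" using n3 unfolding a_def b_def by auto
  note mf = mod_facts[OF p(1) n3]
  have neq: "cs!a \<noteq> cs!p" "cs!b \<noteq> cs!p" "cs!a \<noteq> cs!b"
    using mf an p(1) cs(2) unfolding a_def b_def n_def by (auto simp: nth_eq_iff_index_eq)
  have Ha: "H (cs!p) (cs!a)" using cs(4) p(1) unfolding a_def n_def by auto
  have "(b + 1) mod n = p" unfolding b_def using mf(4) by (simp add: mod_add_left_eq mod_Suc_eq)
  moreover have "H (cs!b) (cs!((b+1) mod n))" using cs(4) an(2) unfolding n_def by auto
  ultimately have Hb: "H (cs!b) (cs!p)" by simp
  have inS: "\<And>q. q < n \<Longrightarrow> cs!q \<in> set xs" using cs(3) sub unfolding n_def by (meson nth_mem subset_iff)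
  define j where "j = idx xs (cs!p)"
  have j: "j < length xs" "xs!j = cs!p" using inS[OF p(1)] idx_props[OF d] unfolding j_def by auto
  have pa: "idx xs (cs!a) < length xs" "xs ! idx xs (cs!a) = cs!a" using idx_props[OF d inS[OF an(1)]] by auto
  have pb: "idx xs (cs!b) < length xs" "xs ! idx xs (cs!b) = cs!b" using idx_props[OF d inS[OF an(2)]] by auto
  have ia: "idx xs (cs!a) < j"
  proof -
    have "idx xs (cs!a) \<le> j" using pmax[OF an(1)] unfolding j_def .
    moreover have "idx xs (cs!a) \<noteq> j" using pa(2) j(2) neq(1) by auto
    ultimately show ?thesis by simp
  qed
  have ib: "idx xs (cs!b) < j"
  proof -
    have "idx xs (cs!b) \<le> j" using pmax[OF an(2)] unfolding j_def .
    moreover have "idx xs (cs!b) \<noteq> j" using pb(2) j(2) neq(2) by auto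
    ultimately show ?thesis by simp
  qed
  have iab: "idx xs (cs!a) \<noteq> idx xs (cs!b)" using pa(2) pb(2) neq(3) by metis
  have "{idx xs (cs!a), idx xs (cs!b)} \<subseteq> {l. l<j \<and> H (xs!l) (xs!j)}"
    using ia ib Ha Hb sym j pa pb by auto
  then have "card {idx xs (cs!a), idx xs (cs!b)} \<le> card {l. l<j \<and> H (xs!l) (xs!j)}"
    by (intro card_mono) auto
  then have "card {l. l<j \<and> H (xs!l) (xs!j)} \<ge> 2" using iab by auto
  moreover have "xs!j \<in> S" using j cs(3) p(1) unfolding n_def by auto
  ultimately show ?thesis using j by blast
qed

lemma dpg_apply:
  assumes G: "graph V E" and D: "DPG_colorable V E k 2" and C: "is_cover V E L H"
    and L: "\<forall>v\<in>V. finite (L v) \<and> 0 \<notin> L v"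
    and f0: "\<forall>v\<in>V. \<forall>i. i \<notin> L v \<longrightarrow> f i v = 0" and f2: "\<forall>v\<in>V. \<forall>i. f i v \<le> 2"
    and fs: "\<forall>v\<in>V. sum (\<lambda>i. f i v) (L v) \<ge> k"
  shows "\<exists>R xs. representative V L R \<and> distinct xs \<and> set xs = R \<and>
    (\<forall>j<length xs. card {l. l<j \<and> H (xs!l) (xs!j)} < f (snd (xs!j)) (fst (xs!j)))"
proof -
  have finV: "finite V" using G unfolding graph_def by auto
  define U where "U = (\<Union>v\<in>V. L v)"
  have finU: "finite U" unfolding U_def using finV L by auto
  define s where "s = Max (insert 1 U)"
  have s1: "s \<ge> 1" unfolding s_def using finU by auto
  have Ls: "\<And>v. v \<in> V \<Longrightarrow> L v \<subseteq> {1..s}"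
  proof
    fix v c assume v: "v \<in> V" and c: "c \<in> L v"
    have "c \<le> s" unfolding s_def using finU v c U_def by (auto intro: Max_ge)
    moreover have "c \<noteq> 0" using L v c by (metis)
    ultimately show "c \<in> {1..s}" by auto
  qed
  define H' where "H' = (\<lambda>x y. x \<in> cover_verts V (\<lambda>_. {1..s}) \<and> y \<in> cover_verts V (\<lambda>_. {1..s}) \<and>
      (H x y \<or> (fst x = fst y \<and> snd x \<noteq> snd y)))"
  have cvL: "\<And>x. x \<in> cover_verts V L \<Longrightarrow> x \<in> cover_verts V (\<lambda>_. {1..s})"
    using Ls unfolding cover_verts_def by blast
  have HH: "\<And>x y. x \<in> cover_verts V L \<Longrightarrow> y \<in> cover_verts V L \<Longrightarrow> H' x y \<longleftrightarrow> H x y"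
  proof -
    fix x y assume x: "x \<in> cover_verts V L" and y: "y \<in> cover_verts V L"
    have "fst x = fst y \<and> snd x \<noteq> snd y \<Longrightarrow> H x y"
      using C x y unfolding is_cover_def cover_verts_def by (cases x; cases y) auto
    then show "H' x y \<longleftrightarrow> H x y" unfolding H'_def using cvL x y by auto
  qed
  have C': "is_cover V E (\<lambda>_. {1..s}) H'"
    unfolding is_cover_def
  proof (intro conjI allI impI ballI)
    fix x y assume h: "H' x y"
    then show "x \<in> cover_verts V (\<lambda>_. {1..s})" "y \<in> cover_verts V (\<lambda>_. {1..s})" unfolding H'_def by auto
    have Hs: "\<forall>x y. H x y \<longrightarrow> x \<noteq> y \<and> H y x" using C unfolding is_cover_def by blast
    show "x \<noteq> y" using h Hs unfolding H'_def by blast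
    have "y \<in> cover_verts V (\<lambda>_. {1..s}) \<and> x \<in> cover_verts V (\<lambda>_. {1..s})"
      "H x y \<or> (fst x = fst y \<and> snd x \<noteq> snd y)" using h unfolding H'_def by auto
    moreover have "H x y \<Longrightarrow> H y x" using Hs by blast
    ultimately show "H' y x" unfolding H'_def by auto
  next
    fix u c c' assume "u \<in> V" "c \<in> {1..s}" "c' \<in> {1..s}" "c \<noteq> c'"
    then show "H' (u, c) (u, c')" unfolding H'_def cover_verts_def by auto
  next
    fix u v c c' assume "u \<noteq> v \<and> H' (u, c) (v, c')"
    then have "u \<noteq> v" "H (u, c) (v, c')" unfolding H'_def by auto
    moreover have "\<forall>u v c c'. u \<noteq> v \<and> H (u, c) (v, c') \<longrightarrow> E u v" using C unfolding is_cover_def by blast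
    ultimately show "E u v" by blast
  next
    fix u v c c1 c2 assume "u \<noteq> v \<and> H' (u, c) (v, c1) \<and> H' (u, c) (v, c2)"
    then have "u \<noteq> v" "H (u, c) (v, c1)" "H (u, c) (v, c2)" unfolding H'_def by auto
    moreover have "\<forall>u v c c1 c2. u \<noteq> v \<and> H (u, c) (v, c1) \<and> H (u, c) (v, c2) \<longrightarrow> c1 = c2" using C unfolding is_cover_def by blast
    ultimately show "c1 = c2" by blast
  qed
  have fsum: "\<forall>v\<in>V. (\<Sum>i=1..s. f i v) \<ge> k"
  proof
    fix v assume v: "v \<in> V"
    have "(\<Sum>i=1..s. f i v) = sum (\<lambda>i. f i v) (L v)"
      using Ls[OF v] f0 v by (intro sum.mono_neutral_right) auto
    then show "(\<Sum>i=1..s. f i v) \<ge> k" using fs v by simp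
  qed
  have f2': "\<forall>v\<in>V. \<forall>i\<in>{1..s}. f i v \<le> 2" using f2 by auto
  obtain R where R: "DP_F_coloring V (\<lambda>_. {1..s}) H' f R"
    using D s1 C' fsum f2' unfolding DPG_colorable_def by blast
  then obtain xs where rep: "representative V (\<lambda>_. {1..s}) R" and xs: "distinct xs" "set xs = R"
    and ord: "\<forall>j < length xs. card {l. l < j \<and> H' (xs ! l) (xs ! j)} < f (snd (xs ! j)) (fst (xs ! j))"
    unfolding DP_F_coloring_def by blast
  have RL: "R \<subseteq> cover_verts V L"
  proof
    fix x assume x: "x \<in> R"
    then obtain j where j: "j < length xs" "xs!j = x" using xs by (metis in_set_conv_nth)
    have xv: "fst x \<in> V" using x rep unfolding representative_def cover_verts_def by auto
    have "f (snd x) (fst x) > 0" using ord j by fastforce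
    then have "snd x \<in> L (fst x)" using f0 xv by force
    then show "x \<in> cover_verts V L" using xv unfolding cover_verts_def by (cases x) auto
  qed
  have repL: "representative V L R" using rep RL unfolding representative_def by auto
  have ord': "\<forall>j<length xs. card {l. l<j \<and> H (xs!l) (xs!j)} < f (snd (xs!j)) (fst (xs!j))"
  proof (intro allI impI)
    fix j assume j: "j < length xs"
    have "{l. l<j \<and> H (xs!l) (xs!j)} = {l. l < j \<and> H' (xs ! l) (xs ! j)}"
    proof -
      have "\<And>l. l < j \<Longrightarrow> H (xs!l) (xs!j) \<longleftrightarrow> H' (xs ! l) (xs ! j)"
      proof -
        fix l assume "l < j"
        then have "xs!l \<in> R" "xs!j \<in> R" using xs j by auto
        then show "H (xs!l) (xs!j) \<longleftrightarrow> H' (xs ! l) (xs ! j)" using HH RL by blast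
      qed
      then show ?thesis by auto
    qed
    then show "card {l. l<j \<and> H (xs!l) (xs!j)} < f (snd (xs!j)) (fst (xs!j))" using ord j by simp
  qed
  show ?thesis using repL xs ord' by blast
qed


definition lcover :: "'v set \<Rightarrow> ('v \<Rightarrow> 'v \<Rightarrow> bool) \<Rightarrow> ('v \<Rightarrow> nat set) \<Rightarrow> 'v \<times> nat \<Rightarrow> 'v \<times> nat \<Rightarrow> bool" where
  "lcover V E L x y \<longleftrightarrow> fst x \<in> V \<and> fst y \<in> V \<and> snd x \<in> L (fst x) \<and> snd y \<in> L (fst y) \<and>
     ((fst x = fst y \<and> snd x \<noteq> snd y) \<or> (E (fst x) (fst y) \<and> snd x = snd y))"

lemma lcover_cover:
  assumes G: "graph V E" shows "is_cover V E L (lcover V E L)"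
proof -
  have Es: "\<And>u v. E u v \<Longrightarrow> u \<in> V \<and> v \<in> V \<and> u \<noteq> v \<and> E v u" using G unfolding graph_def by blast
  show ?thesis unfolding is_cover_def
  proof (intro conjI allI impI ballI)
    fix x y assume h: "lcover V E L x y"
    then show "x \<in> cover_verts V L" "y \<in> cover_verts V L" unfolding lcover_def cover_verts_def
      by (cases x, cases y, auto)+
    show "x \<noteq> y" using h Es unfolding lcover_def by auto
    show "lcover V E L y x" using h Es unfolding lcover_def by auto
  next
    fix u c c' assume "u \<in> V" "c \<in> L u" "c' \<in> L u" "c \<noteq> c'"
    then show "lcover V E L (u, c) (u, c')" unfolding lcover_def by auto
  next
    fix u v c c' assume "u \<noteq> v \<and> lcover V E L (u, c) (v, c')"
    then show "E u v" unfolding lcover_def by auto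
  next
    fix u v c c1 c2 assume "u \<noteq> v \<and> lcover V E L (u, c) (v, c1) \<and> lcover V E L (u, c) (v, c2)"
    then show "c1 = c2" unfolding lcover_def by auto
  qed
qed

lemma cover_sym: "is_cover V E L H \<Longrightarrow> \<forall>x y. H x y \<longrightarrow> H y x"
  unfolding is_cover_def by blast

lemma cover_irr: "is_cover V E L H \<Longrightarrow> H x y \<Longrightarrow> x \<noteq> y"
  unfolding is_cover_def by blast

lemma rep_the:
  assumes "representative V L R" "v \<in> V"
  shows "(v, THE c. (v,c) \<in> R) \<in> R" "(THE c. (v,c) \<in> R) \<in> L v"
proof -
  have "\<exists>!c. (v, c) \<in> R" using assms unfolding representative_def by blast
  then show a: "(v, THE c. (v,c) \<in> R) \<in> R" by (rule theI')
  then show "(THE c. (v,c) \<in> R) \<in> L v" using assms unfolding representative_def cover_verts_def by blast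
qed

lemma cycle_map:
  assumes G: "graph V E" and cyc: "has_cycle_in E T" and T: "T \<subseteq> V" and Li: "\<forall>v\<in>T. i \<in> L v"
  shows "has_cycle_in (lcover V E L) ((\<lambda>v. (v,i)) ` T)"
proof -
  obtain cs where cs: "length cs \<ge> 3" "distinct cs" "set cs \<subseteq> T"
    "\<forall>t < length cs. E (cs ! t) (cs ! ((t + 1) mod length cs))"
    using cyc unfolding has_cycle_in_def by blast
  define ds where "ds = map (\<lambda>v. (v,i)) cs"
  have "length ds \<ge> 3" using cs unfolding ds_def by simp
  moreover have "distinct ds" unfolding ds_def using cs(2) by (simp add: distinct_map inj_on_def)
  moreover have "set ds \<subseteq> (\<lambda>v. (v,i)) ` T" unfolding ds_def using cs(3) by auto
  moreover have "\<forall>t < length ds. lcover V E L (ds ! t) (ds ! ((t + 1) mod length ds))"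
  proof (intro allI impI)
    fix t assume t: "t < length ds"
    let ?u = "cs!t" and ?w = "cs ! ((t + 1) mod length cs)"
    have tl: "t < length cs" "(t + 1) mod length cs < length cs" using t cs(1) unfolding ds_def by (auto intro: mod_less_divisor)
    have e: "E ?u ?w" using cs(4) tl by auto
    have uw: "?u \<in> T" "?w \<in> T" using cs(3) tl by (meson nth_mem subsetD)+
    have "?u \<in> V \<and> ?w \<in> V \<and> ?u \<noteq> ?w" using e G unfolding graph_def by blast
    then have "lcover V E L (?u, i) (?w, i)" using e uw Li unfolding lcover_def by auto
    then show "lcover V E L (ds ! t) (ds ! ((t + 1) mod length ds))" using tl unfolding ds_def by simp
  qed
  ultimately show ?thesis unfolding has_cycle_in_def by blast
qed

lemma ceil_half: "k \<le> 2 * nat \<lceil>real k / 2\<rceil>"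
proof -
  have "real k / 2 \<le> of_int \<lceil>real k / 2\<rceil>" by (rule le_of_int_ceiling)
  moreover have "\<lceil>real k / 2\<rceil> \<ge> 0" by simp
  ultimately have "real k \<le> 2 * real (nat \<lceil>real k / 2\<rceil>)" by linarith
  then show ?thesis by linarith
qed


theorem lemma1:
  fixes V :: "'v set" and E :: "'v \<Rightarrow> 'v \<Rightarrow> bool" and k :: nat
  assumes "k \<ge> 1" and "graph V E" and "DPG_colorable V E k 2"
  shows "DP_colorable V E k \<and> choosable V E k \<and>
         DP_vertex_arborable V E (nat \<lceil>real k / 2\<rceil>) \<and>
         (\<forall>d::nat. 2 * d > k \<and> d \<le> k \<longrightarrow>
            (\<forall>L. k_assignment V d L \<longrightarrow>
               (\<exists>c. L_forested_coloring V E L c \<and>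
                    (\<forall>i\<in>{1..2 * d - k}. independent_on E (color_class V c i)))))"
proof -
  note G = assms(2) and D = assms(3)
  have P1: "DP_colorable V E k"
    unfolding DP_colorable_def
  proof (intro allI impI)
    fix L H assume a: "k_assignment V k L \<and> is_cover V E L H"
    define f where "f = (\<lambda>i v. if i \<in> L v then 1 else (0::nat))"
    have Lf: "\<forall>v\<in>V. finite (L v) \<and> 0 \<notin> L v" using a unfolding k_assignment_def by blast
    have f0: "\<forall>v\<in>V. \<forall>i. i \<notin> L v \<longrightarrow> f i v = 0" unfolding f_def by simp
    have f2: "\<forall>v\<in>V. \<forall>i. f i v \<le> 2" unfolding f_def by simp
    have fs: "\<forall>v\<in>V. sum (\<lambda>i. f i v) (L v) \<ge> k"
      using a unfolding k_assignment_def f_def by simp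
    obtain R xs where R: "representative V L R" "distinct xs" "set xs = R"
      "\<forall>j<length xs. card {l. l<j \<and> H (xs!l) (xs!j)} < f (snd (xs!j)) (fst (xs!j))"
      using dpg_apply[OF G D _ Lf f0 f2 fs, of H] a by blast
    have "independent_on H R" unfolding independent_on_def
    proof (intro ballI notI)
      fix x y assume x: "x \<in> R" and y: "y \<in> R" and h: "H x y"
      obtain j where j: "j < length xs" "card {l. l<j \<and> H (xs!l) (xs!j)} \<ge> 1"
        using indep_core[OF cover_sym[of V E L H] R(2), of x y] x y h R(3) a cover_irr[of V E L H x y] by auto
      have "f (snd (xs!j)) (fst (xs!j)) \<le> 1" unfolding f_def by simp
      then show False using R(4) j by fastforce
    qed
    then show "\<exists>R. representative V L R \<and> independent_on H R" using R by blast
  qed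
  have P2: "choosable V E k"
    unfolding choosable_def
  proof (intro allI impI)
    fix L assume a: "k_assignment V k L"
    obtain R where R: "representative V L R" "independent_on (lcover V E L) R"
      using P1 lcover_cover[OF G, of L] a unfolding DP_colorable_def by blast
    define c where "c = (\<lambda>v. THE c. (v,c) \<in> R)"
    have cR: "\<And>v. v \<in> V \<Longrightarrow> (v, c v) \<in> R \<and> c v \<in> L v" using rep_the[OF R(1)] unfolding c_def by blast
    have "\<forall>u v. E u v \<longrightarrow> c u \<noteq> c v"
    proof (intro allI impI notI)
      fix u v assume e: "E u v" and eq: "c u = c v"
      have uv: "u \<in> V" "v \<in> V" "u \<noteq> v" using e G unfolding graph_def by auto
      have "lcover V E L (u, c u) (v, c v)" using cR[of u] cR[of v] uv e eq unfolding lcover_def by auto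
      then show False using R(2) cR uv unfolding independent_on_def by blast
    qed
    then show "\<exists>c. (\<forall>v\<in>V. c v \<in> L v) \<and> (\<forall>u v. E u v \<longrightarrow> c u \<noteq> c v)" using cR by blast
  qed
  have P3: "DP_vertex_arborable V E (nat \<lceil>real k / 2\<rceil>)"
    unfolding DP_vertex_arborable_def
  proof (intro allI impI)
    fix L H assume a: "k_assignment V (nat \<lceil>real k / 2\<rceil>) L \<and> is_cover V E L H"
    define f where "f = (\<lambda>i v. if i \<in> L v then 2 else (0::nat))"
    have Lf: "\<forall>v\<in>V. finite (L v) \<and> 0 \<notin> L v" using a unfolding k_assignment_def by blast
    have f0: "\<forall>v\<in>V. \<forall>i. i \<notin> L v \<longrightarrow> f i v = 0" unfolding f_def by simp
    have f2: "\<forall>v\<in>V. \<forall>i. f i v \<le> 2" unfolding f_def by simp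
    have fs: "\<forall>v\<in>V. sum (\<lambda>i. f i v) (L v) \<ge> k"
      using a ceil_half[of k] unfolding k_assignment_def f_def by simp
    obtain R xs where R: "representative V L R" "distinct xs" "set xs = R"
      "\<forall>j<length xs. card {l. l<j \<and> H (xs!l) (xs!j)} < f (snd (xs!j)) (fst (xs!j))"
      using dpg_apply[OF G D _ Lf f0 f2 fs, of H] a by blast
    have "forest_on H R" unfolding forest_on_def
    proof
      assume cyc: "has_cycle_in H R"
      obtain j where j: "j < length xs" "card {l. l<j \<and> H (xs!l) (xs!j)} \<ge> 2"
        using cycle_core[OF cover_sym[of V E L H] R(2) cyc] R(3) a by auto
      have "f (snd (xs!j)) (fst (xs!j)) \<le> 2" unfolding f_def by simp
      then show False using R(4) j by fastforce
    qed
    then show "\<exists>R. representative V L R \<and> forest_on H R" using R by blast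
  qed
  have P4: "\<forall>d::nat. 2 * d > k \<and> d \<le> k \<longrightarrow>
            (\<forall>L. k_assignment V d L \<longrightarrow>
               (\<exists>c. L_forested_coloring V E L c \<and>
                    (\<forall>i\<in>{1..2 * d - k}. independent_on E (color_class V c i))))"
  proof (intro allI impI)
    fix d :: nat and L assume dk: "2 * d > k \<and> d \<le> k" and a: "k_assignment V d L"
    define B where "B = {1..2 * d - k}"
    define f where "f = (\<lambda>i v. if i \<in> L v then (if i \<in> B then 1 else 2) else (0::nat))"
    have Lf: "\<forall>v\<in>V. finite (L v) \<and> 0 \<notin> L v" using a unfolding k_assignment_def by blast
    have f0: "\<forall>v\<in>V. \<forall>i. i \<notin> L v \<longrightarrow> f i v = 0" unfolding f_def by simp
    have f2: "\<forall>v\<in>V. \<forall>i. f i v \<le> 2" unfolding f_def by simp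
    have fs: "\<forall>v\<in>V. sum (\<lambda>i. f i v) (L v) \<ge> k"
    proof
      fix v assume v: "v \<in> V"
      have fin: "finite (L v)" and cd: "card (L v) = d" using a v unfolding k_assignment_def by auto
      have "sum (\<lambda>i. f i v) (L v) = sum (\<lambda>i. if i \<in> B then 1 else 2) (L v)"
        unfolding f_def by (rule sum.cong) auto
      also have "\<dots> = card (L v \<inter> B) + 2 * card (L v - B)"
        using fin by (simp add: sum.If_cases Diff_eq)
      finally have e1: "sum (\<lambda>i. f i v) (L v) = card (L v \<inter> B) + 2 * card (L v - B)" .
      have e2: "card (L v \<inter> B) + card (L v - B) = d" using fin cd
        by (metis card_Int_Diff)
      have "card (L v \<inter> B) \<le> card B" by (rule card_mono) (auto simp: B_def)
      then have "card (L v \<inter> B) \<le> 2 * d - k" unfolding B_def by simp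
      then show "sum (\<lambda>i. f i v) (L v) \<ge> k" using e1 e2 dk by linarith
    qed
    have C: "is_cover V E L (lcover V E L)" by (rule lcover_cover[OF G])
    obtain R xs where R: "representative V L R" "distinct xs" "set xs = R"
      "\<forall>j<length xs. card {l. l<j \<and> lcover V E L (xs!l) (xs!j)} < f (snd (xs!j)) (fst (xs!j))"
      using dpg_apply[OF G D C Lf f0 f2 fs] by blast
    define c where "c = (\<lambda>v. THE c. (v,c) \<in> R)"
    have cR: "\<And>v. v \<in> V \<Longrightarrow> (v, c v) \<in> R \<and> c v \<in> L v" using rep_the[OF R(1)] unfolding c_def by blast
    have forest: "\<forall>i. forest_on E (color_class V c i)"
    proof (intro allI)
      fix i
      show "forest_on E (color_class V c i)" unfolding forest_on_def
      proof
        assume cyc: "has_cycle_in E (color_class V c i)"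
        have T: "color_class V c i \<subseteq> V" "\<forall>v\<in>color_class V c i. i \<in> L v"
          unfolding color_class_def using cR by auto
        have S: "(\<lambda>v. (v,i)) ` color_class V c i \<subseteq> set xs"
          using cR R(3) unfolding color_class_def by auto
        obtain j where j: "j < length xs" "card {l. l<j \<and> lcover V E L (xs!l) (xs!j)} \<ge> 2"
          using cycle_core[OF cover_sym[OF C] R(2) cycle_map[OF G cyc T] S] by auto
        have "f (snd (xs!j)) (fst (xs!j)) \<le> 2" unfolding f_def by simp
        then show False using R(4) j by fastforce
      qed
    qed
    have indep: "\<forall>i\<in>{1..2 * d - k}. independent_on E (color_class V c i)"
    proof (intro ballI)
      fix i assume iB: "i \<in> {1..2 * d - k}"
      show "independent_on E (color_class V c i)" unfolding independent_on_def
      proof (intro ballI notI)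
        fix u v assume u: "u \<in> color_class V c i" and v: "v \<in> color_class V c i" and e: "E u v"
        have uv: "u \<in> V" "v \<in> V" "u \<noteq> v" using e G unfolding graph_def by auto
        have cu: "c u = i" "c v = i" using u v unfolding color_class_def by auto
        have h: "lcover V E L (u, i) (v, i)" using cR[of u] cR[of v] uv e cu unfolding lcover_def by auto
        have inx: "(u, i) \<in> set xs" "(v, i) \<in> set xs" using cR[of u] cR[of v] uv cu R(3) by auto
        obtain j where j: "j < length xs" "xs!j \<in> {(u,i),(v,i)}" "card {l. l<j \<and> lcover V E L (xs!l) (xs!j)} \<ge> 1"
          using indep_core[OF cover_sym[OF C] R(2) inx h] uv by auto
        have "f (snd (xs!j)) (fst (xs!j)) \<le> 1" using j(2) iB unfolding f_def B_def by auto
        then show False using R(4) j by fastforce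
      qed
    qed
    have "L_forested_coloring V E L c" unfolding L_forested_coloring_def using cR forest by blast
    then show "\<exists>c. L_forested_coloring V E L c \<and>
                    (\<forall>i\<in>{1..2 * d - k}. independent_on E (color_class V c i))" using indep by blast
  qed
  show ?thesis using P1 P2 P3 P4 by blast
qed

end
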